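(* For any $m$, $n\le m$ and $0<\rho<n$, there exists a code over $\mathrm{GF}(q^m)$ of length $n$ and rank covering radius $\rho$ whose cardinality gives $$K_{\mathrm R}(q^m,n,\rho)\le\left\lfloor\frac{1}{1-\log_{q^{mn}}\left(q^{mn}-V_\rho(q^m,n)\right)}\right\rfloor+1.$$
   Context: The rank $\mathrm{rk}(\mathbf x)$ of $\mathbf x\in\mathrm{GF}(q^m)^n$ is the maximum number of its coordinates linearly independent over $\mathrm{GF}(q)$, and $d_{\mathrm R}(\mathbf x,\mathbf y)=\mathrm{rk}(\mathbf x-\mathbf y)$. $K_{\mathrm R}(q^m,n,\rho)$ is the minimum cardinality of a code in $\mathrm{GF}(q^m)^n$ with rank covering radius $\rho$ (covering radius $=\max_{\mathbf x}\min_{\mathbf c\in C}d_{\mathrm R}(\mathbf x,\mathbf c)$). $V_\rho(q^m,n)=\sum_{u=0}^\rho{n\brack u}\alpha(m,u)$ with $\alpha(m,0)=1$, $\alpha(m,u)=\prod_{i=0}^{u-1}(q^m-q^i)$, ${n\brack u}=\alpha(n,u)/\alpha(u,u)$. *)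

theory Defs
  imports Complex_Main
begin

text \<open>The extension field GF(q^m) is a finite field type 'a; GF(q) is a subfield K of it
  with card K = q and CARD('a) = q^m. Vectors of GF(q^m)^n are functions nat => 'a
  vanishing outside {..<n}.\<close>

definition is_subfield :: "'a::field set \<Rightarrow> bool" where
  "is_subfield K \<longleftrightarrow> 0 \<in> K \<and> 1 \<in> K \<and> (\<forall>x\<in>K. \<forall>y\<in>K. x + y \<in> K \<and> x * y \<in> K)
     \<and> (\<forall>x\<in>K. - x \<in> K) \<and> (\<forall>x\<in>K. x \<noteq> 0 \<longrightarrow> inverse x \<in> K)"

definition vec_space :: "nat \<Rightarrow> (nat \<Rightarrow> 'a::zero) set" where
  "vec_space n = {x. \<forall>i\<ge>n. x i = 0}"

definition lin_indep_over :: "'a::field set \<Rightarrow> nat set \<Rightarrow> (nat \<Rightarrow> 'a) \<Rightarrow> bool" where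
  "lin_indep_over K I x \<longleftrightarrow>
     (\<forall>c. (\<forall>i\<in>I. c i \<in> K) \<longrightarrow> (\<Sum>i\<in>I. c i * x i) = 0 \<longrightarrow> (\<forall>i\<in>I. c i = 0))"

definition rk :: "'a::field set \<Rightarrow> nat \<Rightarrow> (nat \<Rightarrow> 'a) \<Rightarrow> nat" where
  "rk K n x = Max {card I | I. I \<subseteq> {..<n} \<and> lin_indep_over K I x}"

definition rank_dist :: "'a::field set \<Rightarrow> nat \<Rightarrow> (nat \<Rightarrow> 'a) \<Rightarrow> (nat \<Rightarrow> 'a) \<Rightarrow> nat" where
  "rank_dist K n x y = rk K n (x - y)"

definition is_code :: "nat \<Rightarrow> (nat \<Rightarrow> 'a::zero) set \<Rightarrow> bool" where
  "is_code n C \<longleftrightarrow> C \<subseteq> vec_space n \<and> C \<noteq> {}"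

definition cov_radius :: "'a::field set \<Rightarrow> nat \<Rightarrow> (nat \<Rightarrow> 'a) set \<Rightarrow> nat" where
  "cov_radius K n C = Max ((\<lambda>x. Min ((\<lambda>c. rank_dist K n x c) ` C)) ` vec_space n)"

definition K_R :: "'a::field set \<Rightarrow> nat \<Rightarrow> nat \<Rightarrow> nat" where
  "K_R K n \<rho> = (LEAST k. \<exists>C. is_code n C \<and> cov_radius K n C = \<rho> \<and> card C = k)"

definition alpha :: "nat \<Rightarrow> nat \<Rightarrow> nat \<Rightarrow> nat" where
  "alpha q m u = (\<Prod>i<u. q ^ m - q ^ i)"

definition gauss_binom :: "nat \<Rightarrow> nat \<Rightarrow> nat \<Rightarrow> nat" where
  "gauss_binom q n u = alpha q n u div alpha q u u"

definition V :: "nat \<Rightarrow> nat \<Rightarrow> nat \<Rightarrow> nat \<Rightarrow> nat" where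
  "V q m n \<rho> = (\<Sum>u\<le>\<rho>. gauss_binom q n u * alpha q m u)"

end

theory Submission
  imports Defs "HOL-Library.FuncSet"
begin

lemma sf_facts:
  assumes "is_subfield K"
  shows sf0: "0 \<in> K" and sf1: "1 \<in> K"
    and sf_add: "\<And>x y. x \<in> K \<Longrightarrow> y \<in> K \<Longrightarrow> x + y \<in> K"
    and sf_mult: "\<And>x y. x \<in> K \<Longrightarrow> y \<in> K \<Longrightarrow> x * y \<in> K"
    and sf_uminus: "\<And>x. x \<in> K \<Longrightarrow> - x \<in> K"
    and sf_inv: "\<And>x. x \<in> K \<Longrightarrow> inverse x \<in> K"
  using assms unfolding is_subfield_def by auto

lemma sf_diff: "is_subfield K \<Longrightarrow> x \<in> K \<Longrightarrow> y \<in> K \<Longrightarrow> x - y \<in> K"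
  using sf_add sf_uminus by (metis diff_conv_add_uminus)

lemma sf_divide: "is_subfield K \<Longrightarrow> x \<in> K \<Longrightarrow> y \<in> K \<Longrightarrow> x / y \<in> K"
  using sf_mult sf_inv by (metis divide_inverse)

lemma indep_cong: "(\<And>i. i \<in> I \<Longrightarrow> x i = y i) \<Longrightarrow> lin_indep_over K I x = lin_indep_over K I y"
  unfolding lin_indep_over_def by (simp cong: sum.cong)

lemma indep_subset:
  assumes "lin_indep_over K I x" "J \<subseteq> I" "finite I" "0 \<in> K"
  shows "lin_indep_over K J x"
  unfolding lin_indep_over_def
proof (intro allI impI ballI)
  fix c i assume c: "\<forall>i\<in>J. c i \<in> K" and s: "(\<Sum>i\<in>J. c i * x i) = 0" and i: "i \<in> J"
  define c' where "c' = (\<lambda>i. if i \<in> J then c i else 0)"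
  have "(\<Sum>i\<in>I. c' i * x i) = (\<Sum>i\<in>J. c' i * x i)"
    by (rule sum.mono_neutral_right) (use assms in \<open>auto simp: c'_def\<close>)
  also have "\<dots> = 0" using s by (simp add: c'_def)
  finally have s0: "(\<Sum>i\<in>I. c' i * x i) = 0" .
  have "\<forall>i\<in>I. c' i \<in> K" using c assms(4) by (auto simp: c'_def)
  then have "\<forall>i\<in>I. c' i = 0" using assms(1)[unfolded lin_indep_over_def, rule_format, of c'] s0 by blast
  then have "c' i = 0" using i assms(2) by blast
  then show "c i = 0" using i by (simp add: c'_def)
qed

definition spn :: "'a::field set \<Rightarrow> nat set \<Rightarrow> (nat \<Rightarrow> 'a) \<Rightarrow> 'a set" where
  "spn K I x = {\<Sum>i\<in>I. c i * x i | c. \<forall>i\<in>I. c i \<in> K}"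

lemma spnI: assumes "\<forall>i\<in>I. c i \<in> K" "u = (\<Sum>i\<in>I. c i * x i)" shows "u \<in> spn K I x"
  using assms unfolding spn_def by blast

lemma spn_cong: "(\<And>i. i \<in> I \<Longrightarrow> x i = y i) \<Longrightarrow> spn K I x = spn K I y"
  unfolding spn_def by (simp cong: sum.cong)

lemma spn_0: "0 \<in> K \<Longrightarrow> 0 \<in> spn K I x"
  unfolding spn_def by (rule CollectI, rule exI[of _ "\<lambda>_. 0"]) auto

lemma spn_add: assumes "is_subfield K" "u \<in> spn K I x" "v \<in> spn K I x" shows "u + v \<in> spn K I x"
proof -
  obtain c d where c: "u = (\<Sum>i\<in>I. c i * x i)" "\<forall>i\<in>I. c i \<in> K"
    and d: "v = (\<Sum>i\<in>I. d i * x i)" "\<forall>i\<in>I. d i \<in> K" using assms unfolding spn_def by auto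
  have "u + v = (\<Sum>i\<in>I. (c i + d i) * x i)" using c d by (simp add: sum.distrib distrib_right)
  moreover have "\<forall>i\<in>I. c i + d i \<in> K" using c d sf_add[OF assms(1)] by auto
  ultimately show ?thesis by (intro spnI)
qed

lemma spn_smult: assumes "is_subfield K" "k \<in> K" "u \<in> spn K I x" shows "k * u \<in> spn K I x"
proof -
  obtain c where c: "u = (\<Sum>i\<in>I. c i * x i)" "\<forall>i\<in>I. c i \<in> K"
    using assms unfolding spn_def by auto
  have "k * u = (\<Sum>i\<in>I. (k * c i) * x i)" using c by (simp add: sum_distrib_left mult.assoc)
  moreover have "\<forall>i\<in>I. k * c i \<in> K" using c sf_mult[OF assms(1)] assms(2) by auto
  ultimately show ?thesis by (intro spnI)
qed

lemma spn_sum: assumes "is_subfield K" "finite A" "\<And>a. a \<in> A \<Longrightarrow> g a \<in> spn K I x"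
  shows "sum g A \<in> spn K I x"
  using assms(2,3)
proof (induction A rule: finite_induct)
  case empty then show ?case using spn_0 sf0[OF assms(1)] by simp
next
  case (insert a F) then show ?case using spn_add[OF assms(1)] by simp
qed

lemma spn_base: assumes "is_subfield K" "i \<in> I" "finite I" shows "x i \<in> spn K I x"
proof -
  have "(\<Sum>k\<in>I. (if k = i then 1 else 0) * x k) = (\<Sum>k\<in>I. if k = i then x k else 0)"
    by (rule sum.cong) auto
  also have "\<dots> = x i" using assms by simp
  finally have "(\<Sum>k\<in>I. (if k = i then 1 else 0) * x k) = x i" .
  moreover have "\<forall>k\<in>I. (if k = i then 1 else 0) \<in> K" using sf0[OF assms(1)] sf1[OF assms(1)] by auto
  ultimately show ?thesis by (intro spnI) auto
qed

lemma spn_mono: assumes "is_subfield K" "finite J" "\<And>j. j \<in> J \<Longrightarrow> y j \<in> spn K I x"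
  shows "spn K J y \<subseteq> spn K I x"
proof
  fix u assume "u \<in> spn K J y"
  then obtain c where c: "u = (\<Sum>j\<in>J. c j * y j)" "\<forall>j\<in>J. c j \<in> K" unfolding spn_def by auto
  show "u \<in> spn K I x" unfolding c(1)
    by (rule spn_sum[OF assms(1,2)]) (use spn_smult[OF assms(1)] c(2) assms(3) in auto)
qed

lemma spn_card:
  assumes "is_subfield K" "finite I" "lin_indep_over K I x"
  shows "card (spn K I x) = card K ^ card I"
proof -
  have eq: "spn K I x = (\<lambda>c. \<Sum>i\<in>I. c i * x i) ` (PiE I (\<lambda>_. K))"
  proof
    show "spn K I x \<subseteq> (\<lambda>c. \<Sum>i\<in>I. c i * x i) ` (PiE I (\<lambda>_. K))"
    proof
      fix u assume "u \<in> spn K I x"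
      then obtain c where c: "u = (\<Sum>i\<in>I. c i * x i)" "\<forall>i\<in>I. c i \<in> K" unfolding spn_def by auto
      have "restrict c I \<in> PiE I (\<lambda>_. K)" using c by (auto simp: PiE_iff)
      moreover have "u = (\<Sum>i\<in>I. restrict c I i * x i)" using c by simp
      ultimately show "u \<in> (\<lambda>c. \<Sum>i\<in>I. c i * x i) ` (PiE I (\<lambda>_. K))" by blast
    qed
  next
    show "(\<lambda>c. \<Sum>i\<in>I. c i * x i) ` (PiE I (\<lambda>_. K)) \<subseteq> spn K I x"
      unfolding spn_def by (auto simp: PiE_iff)
  qed
  have inj: "inj_on (\<lambda>c. \<Sum>i\<in>I. c i * x i) (PiE I (\<lambda>_. K))"
  proof (rule inj_onI)
    fix c d assume c: "c \<in> PiE I (\<lambda>_. K)" and d: "d \<in> PiE I (\<lambda>_. K)"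
      and e: "(\<Sum>i\<in>I. c i * x i) = (\<Sum>i\<in>I. d i * x i)"
    have "(\<Sum>i\<in>I. (c i - d i) * x i) = 0" using e by (simp add: sum_subtractf left_diff_distrib)
    moreover have "\<forall>i\<in>I. c i - d i \<in> K" using c d sf_diff[OF assms(1)] by (auto simp: PiE_iff)
    ultimately have "\<forall>i\<in>I. c i - d i = 0"
      using assms(3)[unfolded lin_indep_over_def, rule_format, of "\<lambda>i. c i - d i"] by blast
    then show "c = d" using c d by (intro PiE_ext[OF c d]) auto
  qed
  have "card (spn K I x) = card (PiE I (\<lambda>_. K))" using eq card_image[OF inj] by simp
  also have "\<dots> = card K ^ card I" using assms(2) by (simp add: card_PiE)
  finally show ?thesis .
qed

lemma indep_insert:
  assumes sf: "is_subfield K" and "finite I" "lin_indep_over K I x" "j \<notin> I" "x j \<notin> spn K I x"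
  shows "lin_indep_over K (insert j I) x"
  unfolding lin_indep_over_def
proof (intro allI impI)
  fix c assume c: "\<forall>i\<in>insert j I. c i \<in> K" and s: "(\<Sum>i\<in>insert j I. c i * x i) = 0"
  have s2: "c j * x j + (\<Sum>i\<in>I. c i * x i) = 0" using s assms(2,4) by simp
  have cj: "c j = 0"
  proof (rule ccontr)
    assume nz: "c j \<noteq> 0"
    have "x j = (\<Sum>i\<in>I. (- (c i / c j)) * x i)"
    proof -
      have "(\<Sum>i\<in>I. (- (c i / c j)) * x i) = - (\<Sum>i\<in>I. c i * x i) / c j"
        by (simp add: sum_divide_distrib sum_negf)
      also have "\<dots> = x j"
      proof -
        have "- (\<Sum>i\<in>I. c i * x i) = c j * x j" using s2 by (simp add: neg_eq_iff_add_eq_0 add.commute)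
        then show ?thesis using nz by simp
      qed
      finally show ?thesis by simp
    qed
    moreover have "\<forall>i\<in>I. - (c i / c j) \<in> K" using c sf_uminus[OF sf] sf_divide[OF sf] by auto
    ultimately have "x j \<in> spn K I x" by (intro spnI)
    then show False using assms(5) by simp
  qed
  then have "(\<Sum>i\<in>I. c i * x i) = 0" using s2 by simp
  then have "\<forall>i\<in>I. c i = 0" using assms(3) c unfolding lin_indep_over_def by blast
  then show "\<forall>i\<in>insert j I. c i = 0" using cj by simp
qed


lemma rk_set_finite: "finite {card I | I. I \<subseteq> {..<n} \<and> lin_indep_over K I x}"
proof -
  have "{card I | I. I \<subseteq> {..<n} \<and> lin_indep_over K I x} \<subseteq> card ` Pow {..<n}" by auto
  then show ?thesis by (rule finite_subset) simp
qed

lemma indep_empty: "lin_indep_over K {} x"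
  unfolding lin_indep_over_def by simp

lemma rk_ge: "I \<subseteq> {..<n} \<Longrightarrow> lin_indep_over K I x \<Longrightarrow> card I \<le> rk K n x"
  unfolding rk_def by (rule Max_ge[OF rk_set_finite]) blast

lemma rk_obtain: "\<exists>I. I \<subseteq> {..<n} \<and> lin_indep_over K I x \<and> card I = rk K n x"
proof -
  have "rk K n x \<in> {card I | I. I \<subseteq> {..<n} \<and> lin_indep_over K I x}"
  proof -
    have ne: "0 \<in> {card I | I. I \<subseteq> {..<n} \<and> lin_indep_over K I x}"
      by (intro CollectI exI[of _ "{}"]) (simp add: indep_empty)
    have ne2: "{card I | I. I \<subseteq> {..<n} \<and> lin_indep_over K I x} \<noteq> {}" using ne by (intro notI) simp
    show ?thesis unfolding rk_def by (rule Max_in[OF rk_set_finite ne2])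
  qed
  then obtain I where "rk K n x = card I \<and> I \<subseteq> {..<n} \<and> lin_indep_over K I x"
    unfolding mem_Collect_eq by (rule exE)
  then show ?thesis by (intro exI[of _ I]) simp
qed

lemma rk_le_n: "rk K n x \<le> n"
proof -
  obtain I where "I \<subseteq> {..<n}" "card I = rk K n x" using rk_obtain[of n K x] by blast
  then show ?thesis using card_mono[OF finite_lessThan, of I n] by simp
qed

lemma rk_cong: assumes "\<And>i. i < n \<Longrightarrow> x i = y i" shows "rk K n x = rk K n y"
proof -
  have "\<And>I. I \<subseteq> {..<n} \<Longrightarrow> lin_indep_over K I x = lin_indep_over K I y"
    using assms by (intro indep_cong) auto
  then have "{card I | I. I \<subseteq> {..<n} \<and> lin_indep_over K I x} = {card I | I. I \<subseteq> {..<n} \<and> lin_indep_over K I y}"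
    by blast
  then show ?thesis unfolding rk_def by simp
qed

lemma rk_one_change:
  assumes sf: "is_subfield K" and "\<And>i. i \<noteq> j \<Longrightarrow> y i = z i"
  shows "rk K n y \<le> Suc (rk K n z)"
proof -
  obtain J where J: "J \<subseteq> {..<n}" "lin_indep_over K J y" "card J = rk K n y" using rk_obtain by blast
  have fJ: "finite J" using J(1) finite_subset by blast
  have "lin_indep_over K (J - {j}) y" using indep_subset[OF J(2) _ fJ sf0[OF sf]] by blast
  then have "lin_indep_over K (J - {j}) z" using assms(2) by (subst indep_cong[of _ z y]) auto
  then have "card (J - {j}) \<le> rk K n z" using J(1) by (intro rk_ge) auto
  moreover have "card J \<le> Suc (card (J - {j}))" using fJ
    by (simp add: card_Diff_singleton_if) (metis card_0_eq empty_iff le_SucI diff_Suc_1 Suc_pred le_refl neq0_conv)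
  ultimately show ?thesis using J(3) by simp
qed

lemma basis_spans:
  assumes sf: "is_subfield K" and I: "I \<subseteq> {..<n}" "lin_indep_over K I x" "card I = rk K n x"
  shows "spn K {..<n} x = spn K I x"
proof
  have fI: "finite I" using I(1) finite_subset by blast
  show "spn K {..<n} x \<subseteq> spn K I x"
  proof (rule spn_mono[OF sf])
    fix j assume j: "j \<in> {..<n}"
    show "x j \<in> spn K I x"
    proof (rule ccontr)
      assume nj: "x j \<notin> spn K I x"
      then have jI: "j \<notin> I" using spn_base[OF sf _ fI] by blast
      have "lin_indep_over K (insert j I) x" by (rule indep_insert[OF sf fI I(2) jI nj])
      then have "card (insert j I) \<le> rk K n x" using I(1) j by (intro rk_ge) auto
      then show False using I(3) jI fI by simp
    qed
  qed simp
next
  have fI: "finite I" using I(1) finite_subset by blast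
  show "spn K I x \<subseteq> spn K {..<n} x"
    by (rule spn_mono[OF sf fI]) (use spn_base[OF sf] I(1) in auto)
qed

lemma card_spn_rk:
  assumes sf: "is_subfield K"
  shows "card (spn K {..<n} x) = card K ^ rk K n x"
proof -
  obtain I where I: "I \<subseteq> {..<n}" "lin_indep_over K I x" "card I = rk K n x" using rk_obtain by blast
  have fI: "finite I" using I(1) finite_subset by blast
  show ?thesis using basis_spans[OF sf I] spn_card[OF sf fI I(2)] I(3) by simp
qed

lemma card_K_ge2: assumes "is_subfield K" "finite (UNIV :: 'a::field set)" and "(K :: 'a set) = K"
  shows "2 \<le> card K"
proof -
  have "{0, 1} \<subseteq> K" using sf0[OF assms(1)] sf1[OF assms(1)] by auto
  then have "card {0::'a, 1} \<le> card K" by (rule card_mono[OF finite_subset[OF subset_UNIV assms(2)]])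
  then show ?thesis by simp
qed

lemma rk_step:
  fixes K :: "'a::{field,finite} set"
  assumes sf: "is_subfield K"
  shows "rk K (Suc n) (x(n:=a)) = (if a \<in> spn K {..<n} x then rk K n x else Suc (rk K n x))"
proof -
  define y where "y = x(n:=a)"
  obtain I where I: "I \<subseteq> {..<n}" "lin_indep_over K I x" "card I = rk K n x" using rk_obtain by blast
  have fI: "finite I" using I(1) finite_subset by blast
  have W: "spn K {..<n} x = spn K I x" by (rule basis_spans[OF sf I])
  have Iy: "lin_indep_over K I y" using I(1,2) unfolding y_def by (subst indep_cong[of _ _ x]) auto
  have spIy: "spn K I y = spn K I x" using I(1) unfolding y_def by (intro spn_cong) auto
  have upper: "rk K (Suc n) y \<le> Suc (rk K n x)"
  proof -
    obtain J where J: "J \<subseteq> {..<Suc n}" "lin_indep_over K J y" "card J = rk K (Suc n) y"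
      using rk_obtain by blast
    have fJ: "finite J" using J(1) finite_subset by blast
    have "lin_indep_over K (J - {n}) y" using indep_subset[OF J(2) _ fJ sf0[OF sf]] by blast
    then have "lin_indep_over K (J - {n}) x" unfolding y_def by (subst indep_cong[of _ _ "x(n:=a)"]) auto
    then have "card (J - {n}) \<le> rk K n x" using J(1) by (intro rk_ge) auto
    moreover have "card J \<le> Suc (card (J - {n}))" using fJ
      by (simp add: card_Diff_singleton_if) (metis card_0_eq empty_iff le_SucI diff_Suc_1 Suc_pred le_refl neq0_conv)
    ultimately show ?thesis using J(3) by simp
  qed
  show ?thesis
  proof (cases "a \<in> spn K {..<n} x")
    case False
    have nI: "n \<notin> I" using I(1) by auto
    have "y n \<notin> spn K I y" using False W spIy unfolding y_def by simp
    then have "lin_indep_over K (insert n I) y" by (rule indep_insert[OF sf fI Iy nI])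
    then have "card (insert n I) \<le> rk K (Suc n) y" using I(1) by (intro rk_ge) auto
    then show ?thesis using upper False I(3) fI nI unfolding y_def by simp
  next
    case True
    have "I \<subseteq> {..<Suc n}" using I(1) by auto
    then have lower: "rk K n x \<le> rk K (Suc n) y" using I(3) Iy rk_ge[of I "Suc n" K y] by auto
    obtain J where J: "J \<subseteq> {..<Suc n}" "lin_indep_over K J y" "card J = rk K (Suc n) y"
      using rk_obtain by blast
    have fJ: "finite J" using J(1) finite_subset by blast
    have sub: "spn K J y \<subseteq> spn K {..<n} x"
    proof (rule spn_mono[OF sf fJ])
      fix j assume "j \<in> J"
      then have "j < n \<or> j = n" using J(1) by auto
      then show "y j \<in> spn K {..<n} x"
        using True spn_base[OF sf, of j "{..<n}" x] unfolding y_def by auto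
    qed
    have "card K ^ card J \<le> card K ^ rk K n x"
      using card_mono[OF finite_UNIV[THEN finite_subset[OF subset_UNIV]] sub]
        spn_card[OF sf fJ J(2)] card_spn_rk[OF sf, of n x] by simp
    then have "card J \<le> rk K n x"
      using card_K_ge2[OF sf finite_UNIV] by (simp add: power_le_imp_le_exp)
    then show ?thesis using lower J(3) True unfolding y_def by simp
  qed
qed


lemma vs_0: "vec_space 0 = {(\<lambda>_. 0)}"
  unfolding vec_space_def by auto

lemma vs_upd: "x \<in> vec_space n \<Longrightarrow> x(n:=a) \<in> vec_space (Suc n)"
  unfolding vec_space_def by auto

lemma vs_inj: "inj_on (\<lambda>(x,a). x(n:=a)) (vec_space n \<times> B)"
proof (rule inj_onI, clarsimp)
  fix x a x' a' assume x: "x \<in> vec_space n" and x': "x' \<in> vec_space n" and e: "x(n := a) = x'(n := a')"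
  have "a = a'" using fun_cong[OF e, of n] by simp
  moreover have "x = x'"
  proof
    fix i show "x i = x' i" using fun_cong[OF e, of i] x x' unfolding vec_space_def by (cases "i = n") auto
  qed
  ultimately show "x = x' \<and> a = a'" by simp
qed

lemma vs_split: "{y \<in> vec_space (Suc n). P y} = (\<lambda>(x,a). x(n:=a)) ` Sigma (vec_space n) (\<lambda>x. {a. P (x(n:=a))})"
proof
  show "{y \<in> vec_space (Suc n). P y} \<subseteq> (\<lambda>(x,a). x(n:=a)) ` Sigma (vec_space n) (\<lambda>x. {a. P (x(n:=a))})"
  proof
    fix y assume y: "y \<in> {y \<in> vec_space (Suc n). P y}"
    have "y(n:=0) \<in> vec_space n" using y unfolding vec_space_def by auto
    moreover have "y = (y(n:=0))(n := y n)" by simp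
    ultimately show "y \<in> (\<lambda>(x,a). x(n:=a)) ` Sigma (vec_space n) (\<lambda>x. {a. P (x(n:=a))})"
      using y by (intro image_eqI[of _ _ "(y(n:=0), y n)"]) auto
  qed
qed (auto simp: vs_upd)

lemma vs_finite: "finite (vec_space n :: (nat \<Rightarrow> 'a::{zero,finite}) set)"
proof (induction n)
  case 0 then show ?case by (simp add: vs_0)
next
  case (Suc n)
  have "vec_space (Suc n) = {y \<in> vec_space (Suc n). True}" by simp
  also have "\<dots> = (\<lambda>(x,a). x(n:=a)) ` Sigma (vec_space n) (\<lambda>x. {a::'a. True})" by (rule vs_split)
  finally show ?case using Suc by simp
qed

lemma vs_card_split:
  "card {y \<in> vec_space (Suc n). P y} = (\<Sum>x\<in>vec_space n. card {a::'a::{zero,finite}. P (x(n:=a))})"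
proof -
  have "card {y \<in> vec_space (Suc n). P y} = card (Sigma (vec_space n) (\<lambda>x. {a::'a. P (x(n:=a))}))"
    unfolding vs_split by (rule card_image, rule inj_on_subset[OF vs_inj[of n UNIV]]) auto
  also have "\<dots> = (\<Sum>x\<in>vec_space n. card {a::'a::{zero,finite}. P (x(n:=a))})"
    by (rule card_SigmaI) (auto simp: vs_finite)
  finally show ?thesis .
qed

lemma vs_card: "card (vec_space n :: (nat \<Rightarrow> 'a::{zero,finite}) set) = card (UNIV :: 'a set) ^ n"
proof (induction n)
  case 0 then show ?case by (simp add: vs_0)
next
  case (Suc n)
  have "card (vec_space (Suc n) :: (nat \<Rightarrow> 'a) set) = card {y \<in> vec_space (Suc n) :: (nat \<Rightarrow> 'a) set. True}" by simp
  also have "\<dots> = (\<Sum>x\<in>(vec_space n :: (nat \<Rightarrow> 'a) set). card {a::'a. True})" by (rule vs_card_split)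
  finally show ?case using Suc by simp
qed

definition fcount :: "'a::field set \<Rightarrow> nat \<Rightarrow> nat \<Rightarrow> nat" where
  "fcount K n u = card {x \<in> vec_space n. rk K n x = u}"

lemma rk_0: "rk K 0 x = 0" using rk_le_n[of K 0 x] by simp

lemma fcount_0: "fcount K 0 u = (if u = 0 then 1 else 0)"
  unfolding fcount_def vs_0 by (auto simp: rk_0)

lemma card_slice:
  fixes K :: "'a::{field,finite} set"
  assumes sf: "is_subfield K"
  shows "card {a. rk K (Suc n) (x(n:=a)) = u} =
     (if rk K n x = u then card K ^ u else 0) + (if Suc (rk K n x) = u then card (UNIV :: 'a set) - card K ^ rk K n x else 0)"
proof -
  let ?W = "spn K {..<n} x"
  have eq: "{a. rk K (Suc n) (x(n:=a)) = u} = {a. (if a \<in> ?W then rk K n x else Suc (rk K n x)) = u}"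
    by (simp add: rk_step[OF sf])
  show ?thesis
  proof (cases "rk K n x = u")
    case True
    then have "{a. rk K (Suc n) (x(n:=a)) = u} = ?W" unfolding eq by auto
    then show ?thesis using True card_spn_rk[OF sf] by simp
  next
    case F: False
    show ?thesis
    proof (cases "Suc (rk K n x) = u")
      case True
      then have "{a. rk K (Suc n) (x(n:=a)) = u} = - ?W" unfolding eq by auto
      then show ?thesis using True F card_spn_rk[OF sf] by (simp add: Compl_eq_Diff_UNIV card_Diff_subset)
    next
      case False
      then have "{a. rk K (Suc n) (x(n:=a)) = u} = {}" unfolding eq using F by auto
      then show ?thesis using False F by simp
    qed
  qed
qed

lemma sum_if_const: "finite A \<Longrightarrow> (\<Sum>x\<in>A. if P x then c else 0) = c * card {x \<in> A. P x}"
  by (simp add: sum.inter_filter[symmetric])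

lemma sum_if_const2: "finite A \<Longrightarrow> (\<Sum>x\<in>A. if g x = u then h (g x) else 0) = h u * card {x \<in> A. g x = u}"
proof -
  assume "finite A"
  have "(\<Sum>x\<in>A. if g x = u then h (g x) else 0) = (\<Sum>x\<in>A. if g x = u then h u else 0)"
    by (rule sum.cong) auto
  then show ?thesis using sum_if_const[OF \<open>finite A\<close>] by simp
qed

lemma fcount_Suc:
  fixes K :: "'a::{field,finite} set"
  assumes sf: "is_subfield K"
  shows "fcount K (Suc n) u = card K ^ u * fcount K n u +
     (case u of 0 \<Rightarrow> 0 | Suc u' \<Rightarrow> (card (UNIV :: 'a set) - card K ^ u') * fcount K n u')"
proof -
  have "fcount K (Suc n) u = (\<Sum>x\<in>vec_space n. card {a::'a. rk K (Suc n) (x(n:=a)) = u})"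
    unfolding fcount_def by (rule vs_card_split)
  also have "\<dots> = (\<Sum>x\<in>vec_space n. (if rk K n x = u then card K ^ u else 0) +
       (if Suc (rk K n x) = u then card (UNIV :: 'a set) - card K ^ rk K n x else 0))"
    by (rule sum.cong) (auto simp: card_slice[OF sf])
  also have "\<dots> = card K ^ u * fcount K n u + (\<Sum>x\<in>vec_space n.
       (if Suc (rk K n x) = u then card (UNIV :: 'a set) - card K ^ rk K n x else 0))"
    unfolding sum.distrib fcount_def using sum_if_const[OF vs_finite] by simp
  also have "(\<Sum>x\<in>(vec_space n :: (nat \<Rightarrow> 'a) set).
       (if Suc (rk K n x) = u then card (UNIV :: 'a set) - card K ^ rk K n x else 0))
      = (case u of 0 \<Rightarrow> 0 | Suc u' \<Rightarrow> (card (UNIV :: 'a set) - card K ^ u') * fcount K n u')"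
  proof (cases u)
    case 0 then show ?thesis by simp
  next
    case (Suc u')
    have "(\<Sum>x\<in>(vec_space n :: (nat \<Rightarrow> 'a) set).
       (if Suc (rk K n x) = u then card (UNIV :: 'a set) - card K ^ rk K n x else 0))
      = (\<Sum>x\<in>(vec_space n :: (nat \<Rightarrow> 'a) set).
       (if rk K n x = u' then (\<lambda>r. card (UNIV :: 'a set) - card K ^ r) (rk K n x) else 0))"
      using Suc by (intro sum.cong) auto
    also have "\<dots> = (card (UNIV :: 'a set) - card K ^ u') * fcount K n u'"
      unfolding fcount_def by (rule sum_if_const2[OF vs_finite])
    finally show ?thesis using Suc by simp
  qed
  finally show ?thesis .
qed


fun G :: "nat \<Rightarrow> nat \<Rightarrow> nat \<Rightarrow> nat" where
  "G q 0 0 = 1"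
| "G q 0 (Suc u) = 0"
| "G q (Suc n) 0 = 1"
| "G q (Suc n) (Suc u) = q ^ Suc u * G q n (Suc u) + G q n u"

lemma G_n0: "G q n 0 = 1" by (cases n) auto

lemma alpha_0: "alpha q m 0 = 1" unfolding alpha_def by simp

lemma alpha_Suc: "alpha q m (Suc u) = alpha q m u * (q ^ m - q ^ u)"
  unfolding alpha_def by simp

lemma alpha_zero: "n < u \<Longrightarrow> alpha q n u = 0"
  unfolding alpha_def by (rule prod_zero) auto

lemma alpha_SS: "alpha q (Suc n) (Suc k) = (q ^ Suc n - 1) * q ^ k * alpha q n k"
proof -
  have "alpha q (Suc n) (Suc k) = (q ^ Suc n - q ^ 0) * (\<Prod>i<k. q ^ Suc n - q ^ Suc i)"
    unfolding alpha_def by (rule prod.lessThan_Suc_shift)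
  also have "(\<Prod>i<k. q ^ Suc n - q ^ Suc i) = (\<Prod>i<k. q * (q ^ n - q ^ i))"
    by (rule prod.cong) (auto simp: diff_mult_distrib2)
  also have "\<dots> = q ^ k * alpha q n k" unfolding alpha_def by (simp add: prod.distrib)
  finally show ?thesis by simp
qed

lemma arith1:
  fixes q :: nat assumes "1 \<le> q" "u \<le> n"
  shows "q ^ Suc u * (q ^ n - q ^ u) + (q ^ Suc u - 1) * q ^ u = (q ^ Suc n - 1) * q ^ u"
proof -
  have h1: "q ^ u \<le> q ^ n" using assms by (simp add: power_increasing)
  have h2: "1 \<le> q ^ Suc u" "1 \<le> q ^ Suc n" using assms by simp_all
  have "int (q ^ Suc u * (q ^ n - q ^ u) + (q ^ Suc u - 1) * q ^ u) = int ((q ^ Suc n - 1) * q ^ u)"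
    using h1 h2 by (simp add: of_nat_diff algebra_simps)
  then show ?thesis by (simp only: of_nat_eq_iff)
qed

lemma alpha_G: "1 \<le> q \<Longrightarrow> alpha q n u = G q n u * alpha q u u"
proof (induction n arbitrary: u)
  case 0 then show ?case by (cases u) (auto simp: alpha_0 alpha_zero)
next
  case (Suc n)
  show ?case
  proof (cases u)
    case 0 then show ?thesis by (simp add: alpha_0)
  next
    case (Suc u')
    have "G q (Suc n) (Suc u') * alpha q (Suc u') (Suc u')
       = q ^ Suc u' * (G q n (Suc u') * alpha q (Suc u') (Suc u')) + (q ^ Suc u' - 1) * q ^ u' * (G q n u' * alpha q u' u')"
      by (simp add: alpha_SS distrib_left distrib_right mult_ac)
    also have "\<dots> = q ^ Suc u' * alpha q n (Suc u') + (q ^ Suc u' - 1) * q ^ u' * alpha q n u'"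
      using Suc.IH[OF Suc.prems] by simp
    also have "\<dots> = alpha q n u' * (q ^ Suc u' * (q ^ n - q ^ u') + (q ^ Suc u' - 1) * q ^ u')"
      by (simp add: alpha_Suc distrib_left distrib_right mult_ac)
    also have "\<dots> = alpha q n u' * ((q ^ Suc n - 1) * q ^ u')"
    proof (cases "u' \<le> n")
      case True then show ?thesis using arith1[OF Suc.prems True] by simp
    next
      case False then show ?thesis by (simp add: alpha_zero)
    qed
    also have "\<dots> = alpha q (Suc n) (Suc u')" by (simp add: alpha_SS)
    finally show ?thesis using Suc by simp
  qed
qed

lemma alpha_pos: "2 \<le> q \<Longrightarrow> u \<le> m \<Longrightarrow> 0 < alpha q m u"
  unfolding alpha_def by (rule prod_pos) (auto intro: power_strict_increasing)

lemma gauss_G: "2 \<le> q \<Longrightarrow> gauss_binom q n u = G q n u"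
  unfolding gauss_binom_def using alpha_G[of q n u] alpha_pos[of q u u] by simp

lemma fcount_closed:
  fixes K :: "'a::{field,finite} set"
  assumes sf: "is_subfield K" and q: "card K = q" and m: "card (UNIV :: 'a set) = q ^ m"
  shows "fcount K n u = G q n u * alpha q m u"
proof (induction n arbitrary: u)
  case 0 then show ?case by (cases u) (auto simp: fcount_0 alpha_0)
next
  case (Suc n)
  show ?case
  proof (cases u)
    case 0 then show ?thesis using fcount_Suc[OF sf, of n 0] Suc.IH[of 0] by (simp add: alpha_0 G_n0)
  next
    case (Suc u')
    have "fcount K (Suc n) (Suc u') = q ^ Suc u' * (G q n (Suc u') * alpha q m (Suc u')) + (q ^ m - q ^ u') * (G q n u' * alpha q m u')"
      using fcount_Suc[OF sf, of n "Suc u'"] Suc.IH q m by simp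
    also have "\<dots> = G q (Suc n) (Suc u') * alpha q m (Suc u')"
      by (simp add: alpha_Suc distrib_left distrib_right mult_ac)
    finally show ?thesis using Suc by simp
  qed
qed


lemma cover_exists:
  fixes S :: "'b set" and B :: "'b \<Rightarrow> 'b set"
  assumes fS: "finite S" and BS: "\<And>x. x \<in> S \<Longrightarrow> B x \<subseteq> S" and Bv: "\<And>x. x \<in> S \<Longrightarrow> v \<le> card (B x)"
    and ineq: "card S * (card S - v) ^ k < card S ^ k"
  shows "\<exists>t\<in>PiE {..<k} (\<lambda>_. S). \<forall>x\<in>S. \<exists>i<k. t i \<in> B x"
proof (rule ccontr)
  assume neg: "\<not> ?thesis"
  have sub: "PiE {..<k} (\<lambda>_. S) \<subseteq> (\<Union>x\<in>S. PiE {..<k} (\<lambda>_. S - B x))"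
  proof
    fix t assume t: "t \<in> PiE {..<k} (\<lambda>_. S)"
    then obtain x where x: "x \<in> S" "\<forall>i<k. t i \<notin> B x" using neg by blast
    have "t \<in> PiE {..<k} (\<lambda>_. S - B x)" using t x(2) by (auto simp: PiE_iff)
    then show "t \<in> (\<Union>x\<in>S. PiE {..<k} (\<lambda>_. S - B x))" using x(1) by blast
  qed
  have "card S ^ k = card (PiE {..<k} (\<lambda>_. S))" by (simp add: card_PiE)
  also have "\<dots> \<le> card (\<Union>x\<in>S. PiE {..<k} (\<lambda>_. S - B x))"
    by (rule card_mono[OF _ sub]) (use fS in \<open>intro finite_UN_I finite_PiE, auto\<close>)
  also have "\<dots> \<le> (\<Sum>x\<in>S. card (PiE {..<k} (\<lambda>_. S - B x)))" by (rule card_UN_le[OF fS])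
  also have "\<dots> = (\<Sum>x\<in>S. card (S - B x) ^ k)" by (simp add: card_PiE)
  also have "\<dots> \<le> (\<Sum>x\<in>S. (card S - v) ^ k)"
  proof (rule sum_mono)
    fix x assume x: "x \<in> S"
    have "card (S - B x) = card S - card (B x)" using BS[OF x] fS by (simp add: card_Diff_subset finite_subset)
    then have "card (S - B x) \<le> card S - v" using Bv[OF x] by simp
    then show "card (S - B x) ^ k \<le> (card S - v) ^ k" by (rule power_mono) simp
  qed
  also have "\<dots> = card S * (card S - v) ^ k" by simp
  finally show False using ineq by simp
qed

lemma bound_real:
  fixes N V :: nat
  assumes "1 < N" "0 < V" "V < N"
  shows "0 < 1 / (1 - log (real N) (real N - real V))"
    and "real N * (real N - real V) ^ (nat \<lfloor>1 / (1 - log (real N) (real N - real V))\<rfloor> + 1)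
          < real N ^ (nat \<lfloor>1 / (1 - log (real N) (real N - real V))\<rfloor> + 1)"
proof -
  define L where "L = 1 / (1 - log (real N) (real N - real V))"
  define a where "a = ln (real N)"
  define b where "b = ln (real N - real V)"
  have NV: "1 \<le> real N - real V" using assms by linarith
  have a0: "0 < a" unfolding a_def using assms by simp
  have b0: "0 \<le> b" unfolding b_def using NV by simp
  have ba: "b < a" unfolding a_def b_def using NV assms by (subst ln_less_cancel_iff) auto
  have Lab: "L = a / (a - b)" unfolding L_def a_def b_def log_def using a0 ba
    by (simp add: a_def field_simps)
  have Lpos: "0 < L" using Lab a0 ba by simp
  then show "0 < 1 / (1 - log (real N) (real N - real V))" unfolding L_def .
  define k where "k = nat \<lfloor>L\<rfloor> + 1"
  have kL: "L < real k" unfolding k_def using Lpos by linarith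
  then have "a < real k * (a - b)" using Lab ba by (simp add: field_simps)
  then have lnineq: "a + real k * b < real k * a" by (simp add: algebra_simps)
  have "ln (real N * (real N - real V) ^ k) = a + real k * b"
    unfolding a_def b_def using assms NV by (simp add: ln_mult ln_realpow)
  also have "\<dots> < ln (real N ^ k)" using lnineq assms unfolding a_def by (simp add: ln_realpow)
  finally have "ln (real N * (real N - real V) ^ k) < ln (real N ^ k)" .
  then have "real N * (real N - real V) ^ k < real N ^ k"
    using assms NV by (subst (asm) ln_less_cancel_iff) auto
  then show "real N * (real N - real V) ^ (nat \<lfloor>1 / (1 - log (real N) (real N - real V))\<rfloor> + 1)
          < real N ^ (nat \<lfloor>1 / (1 - log (real N) (real N - real V))\<rfloor> + 1)"
    unfolding k_def L_def .
qed

lemma discrete_ivt: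
  fixes R :: "nat \<Rightarrow> nat"
  assumes "R 0 \<le> \<rho>" "\<rho> \<le> R M" "\<And>s. s < M \<Longrightarrow> R (Suc s) \<le> Suc (R s)"
  shows "\<exists>s\<le>M. R s = \<rho>"
proof -
  define s0 where "s0 = (LEAST s. \<rho> \<le> R s)"
  have s0M: "s0 \<le> M" unfolding s0_def by (rule Least_le) (rule assms(2))
  have ge: "\<rho> \<le> R s0" unfolding s0_def by (rule LeastI) (rule assms(2))
  show ?thesis
  proof (cases s0)
    case 0
    then have "R s0 = \<rho>" using ge assms(1) by simp
    then show ?thesis using s0M by blast
  next
    case (Suc p)
    have "p < s0" using Suc by simp
    then have "\<not> \<rho> \<le> R p" unfolding s0_def by (rule not_less_Least)
    moreover have "R s0 \<le> Suc (R p)" using Suc s0M assms(3)[of p] by simp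
    ultimately have "R s0 = \<rho>" using ge by linarith
    then show ?thesis using s0M by blast
  qed
qed


lemma vs_diff: fixes x y :: "nat \<Rightarrow> 'a::ab_group_add" shows "x \<in> vec_space n \<Longrightarrow> y \<in> vec_space n \<Longrightarrow> x - y \<in> vec_space n"
  unfolding vec_space_def by auto

lemma V_card:
  fixes K :: "'a::{field,finite} set"
  assumes sf: "is_subfield K" and q: "card K = q" and m: "card (UNIV :: 'a set) = q ^ m" and q2: "2 \<le> q"
  shows "V q m n \<rho> = card {x \<in> (vec_space n :: (nat \<Rightarrow> 'a) set). rk K n x \<le> \<rho>}"
proof -
  have "V q m n \<rho> = (\<Sum>u\<le>\<rho>. fcount K n u)"
    unfolding V_def using gauss_G[OF q2] fcount_closed[OF sf q m] by simp
  also have "\<dots> = card (\<Union>u\<in>{..\<rho>}. {x \<in> (vec_space n :: (nat \<Rightarrow> 'a) set). rk K n x = u})"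
    unfolding fcount_def by (rule card_UN_disjoint[symmetric]) (auto simp: vs_finite)
  also have "(\<Union>u\<in>{..\<rho>}. {x \<in> (vec_space n :: (nat \<Rightarrow> 'a) set). rk K n x = u})
     = {x \<in> (vec_space n :: (nat \<Rightarrow> 'a) set). rk K n x \<le> \<rho>}" by auto
  finally show ?thesis .
qed

lemma full_rank_exists:
  fixes K :: "'a::{field,finite} set"
  assumes sf: "is_subfield K" and q: "card K = q" and m: "card (UNIV :: 'a set) = q ^ m" and q2: "2 \<le> q"
    and nm: "n \<le> m"
  shows "\<exists>x \<in> (vec_space n :: (nat \<Rightarrow> 'a) set). rk K n x = n"
proof -
  have "alpha q n n = G q n n * alpha q n n" using alpha_G[of q n n] q2 by simp
  moreover have "0 < alpha q n n" using alpha_pos[OF q2] by simp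
  ultimately have "G q n n = 1" by simp
  then have "fcount K n n = alpha q m n" using fcount_closed[OF sf q m] by simp
  moreover have "0 < alpha q m n" using alpha_pos[OF q2 nm] .
  ultimately have "{x \<in> (vec_space n :: (nat \<Rightarrow> 'a) set). rk K n x = n} \<noteq> {}"
    unfolding fcount_def by (metis card.empty less_irrefl)
  then show ?thesis by blast
qed

lemma V_pos: "1 \<le> V q m n \<rho>"
proof -
  have "gauss_binom q n 0 * alpha q m 0 \<le> V q m n \<rho>"
    unfolding V_def by (rule member_le_sum) auto
  moreover have "gauss_binom q n 0 = 1" unfolding gauss_binom_def by (simp add: alpha_0)
  ultimately show ?thesis by (simp add: alpha_0)
qed

theorem proposition11:
  fixes K :: "'a::{field,finite} set" and q m n \<rho> :: nat
  assumes "is_subfield K" and "card K = q" and "card (UNIV :: 'a set) = q ^ m"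
    and "n \<le> m" and "0 < \<rho>" and "\<rho> < n"
  shows "\<exists>C. is_code n C \<and> cov_radius K n C = \<rho> \<and>
           int (card C) \<le> \<lfloor>1 / (1 - log (real (q ^ (m * n))) (real (q ^ (m * n)) - real (V q m n \<rho>)))\<rfloor> + 1
         \<and> int (K_R K n \<rho>) \<le> \<lfloor>1 / (1 - log (real (q ^ (m * n))) (real (q ^ (m * n)) - real (V q m n \<rho>)))\<rfloor> + 1"
proof -
  note sf = assms(1) and qK = assms(2) and mA = assms(3)
  have q2: "2 \<le> q" using card_K_ge2[OF sf finite_UNIV] qK by simp
  define S where "S = (vec_space n :: (nat \<Rightarrow> 'a) set)"
  have fS: "finite S" unfolding S_def by (rule vs_finite)
  have cS: "card S = q ^ (m * n)" unfolding S_def vs_card mA by (simp add: power_mult)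
  define Ball0 where "Ball0 = {y \<in> S. rk K n y \<le> \<rho>}"
  have VB: "V q m n \<rho> = card Ball0" unfolding Ball0_def S_def by (rule V_card[OF sf qK mA q2])
  obtain x0 where x0: "x0 \<in> S" "rk K n x0 = n" using full_rank_exists[OF sf qK mA q2 assms(4)] unfolding S_def by blast
  have "x0 \<notin> Ball0" unfolding Ball0_def using x0 assms(6) by auto
  then have "Ball0 \<subset> S" using x0(1) unfolding Ball0_def by blast
  then have VN: "V q m n \<rho> < q ^ (m * n)" using VB cS fS by (metis psubset_card_mono)
  have N1: "1 < q ^ (m * n)"
  proof -
    have "0 < m * n" using assms(4,6) by simp
    then show ?thesis using q2 one_less_power[of q "m * n"] by simp
  qed
  have V0: "0 < V q m n \<rho>" using V_pos[of q m n \<rho>] by simp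
  define L where "L = 1 / (1 - log (real (q ^ (m * n))) (real (q ^ (m * n)) - real (V q m n \<rho>)))"
  define k where "k = nat \<lfloor>L\<rfloor> + 1"
  have Lpos: "0 < L" unfolding L_def by (rule bound_real(1)[OF N1 V0 VN])
  have rineq: "real (q ^ (m * n)) * (real (q ^ (m * n)) - real (V q m n \<rho>)) ^ k < real (q ^ (m * n)) ^ k"
    unfolding k_def L_def by (rule bound_real(2)[OF N1 V0 VN])
  have ineq: "card S * (card S - V q m n \<rho>) ^ k < card S ^ k"
  proof -
    have "real (q ^ (m * n)) - real (V q m n \<rho>) = real (q ^ (m * n) - V q m n \<rho>)" using VN by (simp add: of_nat_diff)
    then have "real (q ^ (m * n) * (q ^ (m * n) - V q m n \<rho>) ^ k) < real ((q ^ (m * n)) ^ k)"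
      using rineq by (simp only: of_nat_mult of_nat_power)
    then show ?thesis unfolding cS by (simp only: of_nat_less_iff)
  qed
  define B where "B = (\<lambda>x. {c \<in> S. rk K n (x - c) \<le> \<rho>})"
  have BS: "\<And>x. x \<in> S \<Longrightarrow> B x \<subseteq> S" unfolding B_def by auto
  have Bc: "\<And>x. x \<in> S \<Longrightarrow> V q m n \<rho> \<le> card (B x)"
  proof -
    fix x assume x: "x \<in> S"
    have xx: "\<And>y. x - (x - y) = y" by (simp add: fun_eq_iff)
    have "B x = (\<lambda>y. x - y) ` Ball0"
    proof
      show "B x \<subseteq> (\<lambda>y. x - y) ` Ball0"
      proof
        fix c assume c: "c \<in> B x"
        then have "x - c \<in> Ball0" unfolding B_def Ball0_def S_def using x vs_diff S_def by auto
        moreover have "c = x - (x - c)" by (simp add: fun_eq_iff)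
        ultimately show "c \<in> (\<lambda>y. x - y) ` Ball0" by blast
      qed
      show "(\<lambda>y. x - y) ` Ball0 \<subseteq> B x"
        unfolding B_def Ball0_def S_def using x vs_diff S_def xx by auto
    qed
    moreover have "inj_on (\<lambda>y. x - y) Ball0" by (rule inj_onI) (metis xx)
    ultimately have "card (B x) = card Ball0" by (simp add: card_image)
    then show "V q m n \<rho> \<le> card (B x)" using VB by simp
  qed
  obtain t where t: "t \<in> PiE {..<k} (\<lambda>_. S)" and tcov: "\<forall>x\<in>S. \<exists>i<k. t i \<in> B x"
    using cover_exists[of S B "V q m n \<rho>" k, OF fS BS Bc ineq] by blast
  define ts where "ts = (\<lambda>s i j. if i * n + j < s then 0 else t i j)"
  define R where "R = (\<lambda>s. cov_radius K n (ts s ` {..<k}))"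
  have k1: "1 \<le> k" unfolding k_def by simp
  have tS: "\<And>i. i < k \<Longrightarrow> t i \<in> S" using t by (auto simp: PiE_iff)
  have tsS: "\<And>s i. i < k \<Longrightarrow> ts s i \<in> S"
    using tS unfolding ts_def S_def vec_space_def by auto
  have Rdef: "\<And>s. R s = Max ((\<lambda>x. Min ((\<lambda>i. rk K n (x - ts s i)) ` {..<k})) ` S)"
    unfolding R_def cov_radius_def rank_dist_def S_def by (simp add: image_image)
  have neS: "S \<noteq> {}" using x0 by auto
  have nek: "{..<k} \<noteq> {}" using k1 lessThan_empty_iff[of k] by simp
  have R0: "R 0 \<le> \<rho>"
  proof -
    have "\<And>x. x \<in> S \<Longrightarrow> Min ((\<lambda>i. rk K n (x - ts 0 i)) ` {..<k}) \<le> \<rho>"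
    proof -
      fix x assume x: "x \<in> S"
      obtain i where i: "i < k" "t i \<in> B x" using tcov x by blast
      have "ts 0 i = t i" unfolding ts_def by simp
      then have "rk K n (x - ts 0 i) \<le> \<rho>" using i unfolding B_def by simp
      moreover have "Min ((\<lambda>i. rk K n (x - ts 0 i)) ` {..<k}) \<le> rk K n (x - ts 0 i)"
        using i by (intro Min_le) auto
      ultimately show "Min ((\<lambda>i. rk K n (x - ts 0 i)) ` {..<k}) \<le> \<rho>" by simp
    qed
    then show ?thesis unfolding Rdef using fS neS by (subst Max_le_iff) auto
  qed
  have RM: "\<rho> \<le> R (k * n)"
  proof -
    have z: "\<And>i. i < k \<Longrightarrow> x0 - ts (k * n) i = x0"
    proof
      fix i j assume i: "i < k"
      show "(x0 - ts (k * n) i) j = x0 j"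
      proof (cases "j < n")
        case True
        have "i * n + j < (Suc i) * n" using True by simp
        also have "\<dots> \<le> k * n" using i by (intro mult_right_mono) auto
        finally show ?thesis unfolding ts_def by (simp add: fun_diff_def)
      next
        case False
        then show ?thesis using tS[OF i] unfolding ts_def S_def vec_space_def by (auto simp: fun_diff_def)
      qed
    qed
    have "(\<lambda>i. rk K n (x0 - ts (k * n) i)) ` {..<k} = {n}"
      using z x0(2) nek by auto
    then have "Min ((\<lambda>i. rk K n (x0 - ts (k * n) i)) ` {..<k}) = n" by simp
    moreover have "Min ((\<lambda>i. rk K n (x0 - ts (k * n) i)) ` {..<k}) \<le> R (k * n)"
      unfolding Rdef using fS x0(1) by (intro Max_ge) auto
    ultimately show ?thesis using assms(6) by simp
  qed
  have Rstep: "\<And>s. R (Suc s) \<le> Suc (R s)"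
  proof -
    fix s
    have "\<And>x. x \<in> S \<Longrightarrow> Min ((\<lambda>i. rk K n (x - ts (Suc s) i)) ` {..<k}) \<le> Suc (R s)"
    proof -
      fix x assume x: "x \<in> S"
      have "Min ((\<lambda>i. rk K n (x - ts s i)) ` {..<k}) \<in> (\<lambda>i. rk K n (x - ts s i)) ` {..<k}"
        using nek by (intro Min_in) auto
      then obtain i where i: "i < k" "Min ((\<lambda>i. rk K n (x - ts s i)) ` {..<k}) = rk K n (x - ts s i)"
        by auto
      have "Min ((\<lambda>i. rk K n (x - ts (Suc s) i)) ` {..<k}) \<le> rk K n (x - ts (Suc s) i)"
        using i by (intro Min_le) auto
      also have "\<dots> \<le> Suc (rk K n (x - ts s i))"
      proof (rule rk_one_change[OF sf, of "s - i * n"])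
        fix j assume "j \<noteq> s - i * n"
        then have "(i * n + j < Suc s) = (i * n + j < s)" by auto
        then show "(x - ts (Suc s) i) j = (x - ts s i) j" unfolding ts_def by simp
      qed
      also have "\<dots> = Suc (Min ((\<lambda>i. rk K n (x - ts s i)) ` {..<k}))" using i by simp
      also have "\<dots> \<le> Suc (R s)"
        unfolding Rdef using fS x by (simp add: Max_ge)
      finally show "Min ((\<lambda>i. rk K n (x - ts (Suc s) i)) ` {..<k}) \<le> Suc (R s)" .
    qed
    then show "R (Suc s) \<le> Suc (R s)" unfolding Rdef[of "Suc s"] using fS neS by (subst Max_le_iff) auto
  qed
  obtain s where s: "R s = \<rho>" using discrete_ivt[of R \<rho> "k * n"] R0 RM Rstep by blast
  define C where "C = ts s ` {..<k}"
  have code: "is_code n C" unfolding is_code_def C_def using tsS nek unfolding S_def by auto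
  have cr: "cov_radius K n C = \<rho>" using s unfolding R_def C_def by simp
  have cardC: "card C \<le> k" unfolding C_def using card_image_le[of "{..<k}" "ts s"] by simp
  have kint: "int k = \<lfloor>L\<rfloor> + 1" unfolding k_def using Lpos by simp
  have KR: "K_R K n \<rho> \<le> card C"
    unfolding K_R_def by (rule Least_le) (use code cr in blast)
  show ?thesis
    using code cr cardC KR kint unfolding L_def[symmetric] by (intro exI[of _ C]) auto
qed

end
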